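(* Let $(X,A,\prec)$ be an alignment of the family $\{(X_a,\prec_a)\}_{a\in I}$ and let $\mathfrak{Q}$ be a partition of $X$ into blocks such that (i) every column $P\in\mathcal{C}(X,A)$ is contained in some block $Y\in\mathfrak{Q}$, and (ii) there is a strict partial order $\triangleleft$ on $\mathfrak{Q}$ such that for any two distinct blocks $Y',Y''$, if there are columns $P\subseteq Y'$ and $Q\subseteq Y''$ with $P\prec Q$ then $Y'\triangleleft Y''$. Define $\prec'$ on $\mathcal{C}(X,A)$ by $P\prec' Q$ if and only if either $P,Q\subseteq Y$ for some $Y\in\mathfrak{Q}$ and $P\prec Q$, or $P\subseteq Y'$, $Q\subseteq Y''$ with $Y'\triangleleft Y''$. Then $\prec'$ is a strict partial order extending $\prec$, and $(X,A,\prec')$ is an alignment of the family.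
   Context: Let $I$ be a finite index set ("rows"), and for each $a\in I$ let $(X_a,\prec_a)$ be a finite set with a strict partial order. Elements of $X_a$ are written $(a,i)$, and $X=\dot\bigcup_{a\in I}X_a$. For a simple undirected graph $(X,A)$, $\mathcal{C}(X,A)$ denotes its set of connected components ("columns"). An alignment of the family is a triple $(X,A,\prec)$ where $\prec$ is a strict partial order on $\mathcal{C}(X,A)$ such that: (P1) every $Q\in\mathcal{C}(X,A)$ induces a complete subgraph of $(X,A)$; (P2) if $(a,i)\in Q$ and $(a,j)\in Q$ then $i=j$; (P3) if $(a,i)\in P$, $(a,j)\in Q$ and $(a,i)\prec_a(a,j)$ then $P\prec Q$; (P4) if $P\prec Q$, $(a,i)\in P$ and $(a,j)\in Q$, then $(a,i)\prec_a(a,j)$ or $(a,i)$ and $(a,j)$ are incomparable w.r.t. $\prec_a$. *)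

theory Defs
  imports Main "HOL-Library.Disjoint_Sets"
begin

text \<open>Elements of X are pairs (a,i) with row a = fst (a,i). The row sets are
  X_a = {x \<in> X. fst x = a}; lt a is the strict partial order on X_a.\<close>

definition row :: "('r \<times> 'e) set \<Rightarrow> 'r \<Rightarrow> ('r \<times> 'e) set" where
  "row X a = {x \<in> X. fst x = a}"

definition strict_po_on :: "'a set \<Rightarrow> ('a \<Rightarrow> 'a \<Rightarrow> bool) \<Rightarrow> bool" where
  "strict_po_on S R \<longleftrightarrow> (\<forall>x\<in>S. \<not> R x x) \<and>
     (\<forall>x\<in>S. \<forall>y\<in>S. \<forall>z\<in>S. R x y \<longrightarrow> R y z \<longrightarrow> R x z)"

definition family :: "'r set \<Rightarrow> ('r \<times> 'e) set \<Rightarrow> ('r \<Rightarrow> ('r \<times> 'e) \<Rightarrow> ('r \<times> 'e) \<Rightarrow> bool) \<Rightarrow> bool" where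
  "family I X lt \<longleftrightarrow> finite I \<and> finite X \<and> (\<forall>x\<in>X. fst x \<in> I) \<and>
     (\<forall>a\<in>I. strict_po_on (row X a) (lt a))"

definition simple_graph :: "'a set \<Rightarrow> ('a \<Rightarrow> 'a \<Rightarrow> bool) \<Rightarrow> bool" where
  "simple_graph X A \<longleftrightarrow> (\<forall>u v. A u v \<longrightarrow> u \<in> X \<and> v \<in> X) \<and>
     (\<forall>u v. A u v \<longrightarrow> A v u) \<and> (\<forall>u. \<not> A u u)"

definition components :: "'a set \<Rightarrow> ('a \<Rightarrow> 'a \<Rightarrow> bool) \<Rightarrow> 'a set set" where
  "components X A = {{y \<in> X. (x, y) \<in> {(u, v). A u v \<and> u \<in> X \<and> v \<in> X}\<^sup>*} | x. x \<in> X}"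

definition alignment ::
  "'r set \<Rightarrow> ('r \<times> 'e) set \<Rightarrow> ('r \<Rightarrow> ('r \<times> 'e) \<Rightarrow> ('r \<times> 'e) \<Rightarrow> bool)
   \<Rightarrow> (('r \<times> 'e) \<Rightarrow> ('r \<times> 'e) \<Rightarrow> bool) \<Rightarrow> (('r \<times> 'e) set \<Rightarrow> ('r \<times> 'e) set \<Rightarrow> bool) \<Rightarrow> bool" where
  "alignment I X lt A prec \<longleftrightarrow>
     simple_graph X A \<and>
     strict_po_on (components X A) prec \<and>
     (\<forall>Q\<in>components X A. \<forall>x\<in>Q. \<forall>y\<in>Q. x \<noteq> y \<longrightarrow> A x y) \<and>
     (\<forall>Q\<in>components X A. \<forall>x\<in>Q. \<forall>y\<in>Q. fst x = fst y \<longrightarrow> x = y) \<and>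
     (\<forall>P\<in>components X A. \<forall>Q\<in>components X A. \<forall>x\<in>P. \<forall>y\<in>Q.
        fst x = fst y \<longrightarrow> lt (fst x) x y \<longrightarrow> prec P Q) \<and>
     (\<forall>P\<in>components X A. \<forall>Q\<in>components X A. prec P Q \<longrightarrow> (\<forall>x\<in>P. \<forall>y\<in>Q.
        fst x = fst y \<longrightarrow>
          lt (fst x) x y \<or> (x \<noteq> y \<and> \<not> lt (fst x) x y \<and> \<not> lt (fst x) y x)))"

end

theory Submission
  imports Defs
begin

theorem lemma6:
  fixes I :: "'r set" and X :: "('r \<times> 'e) set"
    and lt :: "'r \<Rightarrow> ('r \<times> 'e) \<Rightarrow> ('r \<times> 'e) \<Rightarrow> bool"
    and A :: "('r \<times> 'e) \<Rightarrow> ('r \<times> 'e) \<Rightarrow> bool"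
    and prec :: "('r \<times> 'e) set \<Rightarrow> ('r \<times> 'e) set \<Rightarrow> bool"
    and \<Q> :: "('r \<times> 'e) set set"
    and tri :: "('r \<times> 'e) set \<Rightarrow> ('r \<times> 'e) set \<Rightarrow> bool"
  assumes fam: "family I X lt"
    and align: "alignment I X lt A prec"
    and part: "partition_on X \<Q>"
    and cols_in_blocks: "\<forall>P\<in>components X A. \<exists>Y\<in>\<Q>. P \<subseteq> Y"
    and tri_spo: "strict_po_on \<Q> tri"
    and tri_compat: "\<forall>Y'\<in>\<Q>. \<forall>Y''\<in>\<Q>. Y' \<noteq> Y'' \<longrightarrow>
        (\<exists>P\<in>components X A. \<exists>Q\<in>components X A. P \<subseteq> Y' \<and> Q \<subseteq> Y'' \<and> prec P Q) \<longrightarrow> tri Y' Y''"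
  defines "prec' \<equiv> \<lambda>P Q. (\<exists>Y\<in>\<Q>. P \<subseteq> Y \<and> Q \<subseteq> Y \<and> prec P Q) \<or>
        (\<exists>Y'\<in>\<Q>. \<exists>Y''\<in>\<Q>. P \<subseteq> Y' \<and> Q \<subseteq> Y'' \<and> tri Y' Y'')"
  shows "strict_po_on (components X A) prec' \<and>
         (\<forall>P\<in>components X A. \<forall>Q\<in>components X A. prec P Q \<longrightarrow> prec' P Q) \<and>
         alignment I X lt A prec'"
proof -
  note AL = align[unfolded alignment_def]
  note sgA = AL[THEN conjunct1]
  note spoA = AL[THEN conjunct2, THEN conjunct1]
  note P1A = AL[THEN conjunct2, THEN conjunct2, THEN conjunct1]
  note P2A = AL[THEN conjunct2, THEN conjunct2, THEN conjunct2, THEN conjunct1]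
  note P3A = AL[THEN conjunct2, THEN conjunct2, THEN conjunct2, THEN conjunct2, THEN conjunct1]
  note P4A = AL[THEN conjunct2, THEN conjunct2, THEN conjunct2, THEN conjunct2, THEN conjunct2]
  have uniq: "\<And>Y1 Y2 z. Y1 \<in> \<Q> \<Longrightarrow> Y2 \<in> \<Q> \<Longrightarrow> z \<in> Y1 \<Longrightarrow> z \<in> Y2 \<Longrightarrow> Y1 = Y2"
    using partition_onD2[OF part] disjointD by blast
  have ne: "\<And>P. P \<in> components X A \<Longrightarrow> \<exists>z. z \<in> P"
    unfolding components_def by blast
  have cdisj: "\<And>P Q z. P \<in> components X A \<Longrightarrow> Q \<in> components X A \<Longrightarrow> z \<in> P \<Longrightarrow> z \<in> Q \<Longrightarrow> P = Q"
  proof -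
    fix P Q z assume P: "P \<in> components X A" and Q: "Q \<in> components X A" and zP: "z \<in> P" and zQ: "z \<in> Q"
    let ?R = "{(u, v). A u v \<and> u \<in> X \<and> v \<in> X}"
    have sg: "simple_graph X A" by (rule sgA)
    have symR: "sym ?R" using sg unfolding simple_graph_def sym_def by blast
    have symRs: "sym (?R\<^sup>*)" using symR by (simp add: sym_rtrancl)
    obtain p where p: "p \<in> X" "P = {y \<in> X. (p, y) \<in> ?R\<^sup>*}" using P unfolding components_def by blast
    obtain q where q: "q \<in> X" "Q = {y \<in> X. (q, y) \<in> ?R\<^sup>*}" using Q unfolding components_def by blast
    have pz: "(p,z) \<in> ?R\<^sup>*" and qz: "(q,z) \<in> ?R\<^sup>*" using zP zQ p q by auto
    have "(z,q) \<in> ?R\<^sup>*" using qz symRs by (meson symD)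
    hence pq: "(p,q) \<in> ?R\<^sup>*" using pz by (meson rtrancl_trans)
    have "(q,p) \<in> ?R\<^sup>*" using pq symRs by (meson symD)
    show "P = Q" using p q pq \<open>(q,p) \<in> ?R\<^sup>*\<close> by (auto intro: rtrancl_trans)
  qed
  have sub: "\<And>P. P \<in> components X A \<Longrightarrow> P \<subseteq> X" unfolding components_def by blast
  define blk where "blk P = (SOME Y. Y \<in> \<Q> \<and> P \<subseteq> Y)" for P
  have blk: "\<And>P. P \<in> components X A \<Longrightarrow> blk P \<in> \<Q> \<and> P \<subseteq> blk P"
    unfolding blk_def using cols_in_blocks by (metis (no_types, lifting) someI_ex)
  have blk_u: "\<And>P Y. P \<in> components X A \<Longrightarrow> Y \<in> \<Q> \<Longrightarrow> P \<subseteq> Y \<Longrightarrow> Y = blk P"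
    by (metis blk ne subsetD uniq)
  have pc: "\<And>P Q. P \<in> components X A \<Longrightarrow> Q \<in> components X A \<Longrightarrow>
      prec' P Q \<longleftrightarrow> (blk P = blk Q \<and> prec P Q) \<or> tri (blk P) (blk Q)"
  proof -
    fix P Q assume P: "P \<in> components X A" and Q: "Q \<in> components X A"
    have e1: "(\<exists>Y\<in>\<Q>. P \<subseteq> Y \<and> Q \<subseteq> Y \<and> prec P Q) \<longleftrightarrow> (blk P = blk Q \<and> prec P Q)"
    proof
      assume "\<exists>Y\<in>\<Q>. P \<subseteq> Y \<and> Q \<subseteq> Y \<and> prec P Q"
      then obtain Y where Y: "Y \<in> \<Q>" "P \<subseteq> Y" "Q \<subseteq> Y" "prec P Q" by blast
      have "Y = blk P" by (rule blk_u[OF P Y(1) Y(2)])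
      moreover have "Y = blk Q" by (rule blk_u[OF Q Y(1) Y(3)])
      ultimately show "blk P = blk Q \<and> prec P Q" using Y(4) by simp
    next
      assume h: "blk P = blk Q \<and> prec P Q"
      show "\<exists>Y\<in>\<Q>. P \<subseteq> Y \<and> Q \<subseteq> Y \<and> prec P Q"
        using blk[OF P] blk[OF Q] h by (intro bexI[of _ "blk P"]) auto
    qed
    have e2: "(\<exists>Y'\<in>\<Q>. \<exists>Y''\<in>\<Q>. P \<subseteq> Y' \<and> Q \<subseteq> Y'' \<and> tri Y' Y'') \<longleftrightarrow> tri (blk P) (blk Q)"
    proof
      assume "\<exists>Y'\<in>\<Q>. \<exists>Y''\<in>\<Q>. P \<subseteq> Y' \<and> Q \<subseteq> Y'' \<and> tri Y' Y''"
      then obtain Y' Y'' where Y: "Y' \<in> \<Q>" "Y'' \<in> \<Q>" "P \<subseteq> Y'" "Q \<subseteq> Y''" "tri Y' Y''" by blast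
      have "Y' = blk P" by (rule blk_u[OF P Y(1) Y(3)])
      moreover have "Y'' = blk Q" by (rule blk_u[OF Q Y(2) Y(4)])
      ultimately show "tri (blk P) (blk Q)" using Y(5) by simp
    next
      assume h: "tri (blk P) (blk Q)"
      show "\<exists>Y'\<in>\<Q>. \<exists>Y''\<in>\<Q>. P \<subseteq> Y' \<and> Q \<subseteq> Y'' \<and> tri Y' Y''"
        using blk[OF P] blk[OF Q] h by blast
    qed
    show "prec' P Q \<longleftrightarrow> (blk P = blk Q \<and> prec P Q) \<or> tri (blk P) (blk Q)"
      unfolding prec'_def using e1 e2 by simp
  qed
  have spo: "strict_po_on (components X A) prec" by (rule spoA)
  have tirr: "\<And>Y. Y \<in> \<Q> \<Longrightarrow> \<not> tri Y Y" using tri_spo unfolding strict_po_on_def by blast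
  have ttr: "\<And>Y1 Y2 Y3. Y1 \<in> \<Q> \<Longrightarrow> Y2 \<in> \<Q> \<Longrightarrow> Y3 \<in> \<Q> \<Longrightarrow> tri Y1 Y2 \<Longrightarrow> tri Y2 Y3 \<Longrightarrow> tri Y1 Y3"
    using tri_spo unfolding strict_po_on_def by blast
  have pirr: "\<And>P. P \<in> components X A \<Longrightarrow> \<not> prec P P" using spo unfolding strict_po_on_def by blast
  have ptr: "\<And>P Q R. P \<in> components X A \<Longrightarrow> Q \<in> components X A \<Longrightarrow> R \<in> components X A \<Longrightarrow> prec P Q \<Longrightarrow> prec Q R \<Longrightarrow> prec P R"
    using spo unfolding strict_po_on_def by blast
  have ext: "\<And>P Q. P \<in> components X A \<Longrightarrow> Q \<in> components X A \<Longrightarrow> prec P Q \<Longrightarrow> prec' P Q"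
  proof -
    fix P Q assume P: "P \<in> components X A" and Q: "Q \<in> components X A" and pq: "prec P Q"
    show "prec' P Q"
    proof (cases "blk P = blk Q")
      case True thus ?thesis using pc[OF P Q] pq by blast
    next
      case False
      hence "tri (blk P) (blk Q)" using tri_compat blk[OF P] blk[OF Q] P Q pq by blast
      thus ?thesis using pc[OF P Q] by blast
    qed
  qed
  have spo': "strict_po_on (components X A) prec'"
    unfolding strict_po_on_def
  proof (intro conjI ballI impI)
    fix P assume P: "P \<in> components X A"
    show "\<not> prec' P P" using pc[OF P P] pirr[OF P] tirr blk[OF P] by blast
  next
    fix P Q R assume P: "P \<in> components X A" and Q: "Q \<in> components X A" and R: "R \<in> components X A"
      and a: "prec' P Q" and b: "prec' Q R"
    have bP: "blk P \<in> \<Q>" and bQ: "blk Q \<in> \<Q>" and bR: "blk R \<in> \<Q>" using blk P Q R by auto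
    have a': "(blk P = blk Q \<and> prec P Q) \<or> tri (blk P) (blk Q)" using a pc[OF P Q] by blast
    have b': "(blk Q = blk R \<and> prec Q R) \<or> tri (blk Q) (blk R)" using b pc[OF Q R] by blast
    have "(blk P = blk R \<and> prec P R) \<or> tri (blk P) (blk R)"
    proof (cases "blk P = blk Q \<and> prec P Q")
      case True
      show ?thesis
      proof (cases "blk Q = blk R \<and> prec Q R")
        case True2: True
        thus ?thesis using True ptr[OF P Q R] by simp
      next
        case False
        thus ?thesis using True b' by auto
      qed
    next
      case False
      hence t1: "tri (blk P) (blk Q)" using a' by blast
      show ?thesis
      proof (cases "blk Q = blk R \<and> prec Q R")
        case True
        thus ?thesis using t1 by auto
      next
        case False
        hence "tri (blk Q) (blk R)" using b' by blast
        thus ?thesis using t1 ttr[OF bP bQ bR] by blast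
      qed
    qed
    thus "prec' P R" using pc[OF P R] by blast
  qed
  have al: "alignment I X lt A prec'"
    unfolding alignment_def
  proof (intro conjI)
    show "simple_graph X A" by (rule sgA)
    show "strict_po_on (components X A) prec'" by (rule spo')
    show "\<forall>Q\<in>components X A. \<forall>x\<in>Q. \<forall>y\<in>Q. x \<noteq> y \<longrightarrow> A x y" by (rule P1A)
    show "\<forall>Q\<in>components X A. \<forall>x\<in>Q. \<forall>y\<in>Q. fst x = fst y \<longrightarrow> x = y" by (rule P2A)
    show "\<forall>P\<in>components X A. \<forall>Q\<in>components X A. \<forall>x\<in>P. \<forall>y\<in>Q.
        fst x = fst y \<longrightarrow> lt (fst x) x y \<longrightarrow> prec' P Q" using P3A ext by blast
    have P4: "\<forall>P\<in>components X A. \<forall>Q\<in>components X A. prec P Q \<longrightarrow> (\<forall>x\<in>P. \<forall>y\<in>Q.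
        fst x = fst y \<longrightarrow>
          lt (fst x) x y \<or> (x \<noteq> y \<and> \<not> lt (fst x) x y \<and> \<not> lt (fst x) y x))"
      by (rule P4A)
    have P3: "\<forall>P\<in>components X A. \<forall>Q\<in>components X A. \<forall>x\<in>P. \<forall>y\<in>Q.
        fst x = fst y \<longrightarrow> lt (fst x) x y \<longrightarrow> prec P Q" by (rule P3A)
    show "\<forall>P\<in>components X A. \<forall>Q\<in>components X A. prec' P Q \<longrightarrow> (\<forall>x\<in>P. \<forall>y\<in>Q.
        fst x = fst y \<longrightarrow>
          lt (fst x) x y \<or> (x \<noteq> y \<and> \<not> lt (fst x) x y \<and> \<not> lt (fst x) y x))"
    proof (intro ballI impI)
      fix P Q x y assume P: "P \<in> components X A" and Q: "Q \<in> components X A" and pq: "prec' P Q"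
        and x: "x \<in> P" and y: "y \<in> Q" and f: "fst x = fst y"
      show "lt (fst x) x y \<or> (x \<noteq> y \<and> \<not> lt (fst x) x y \<and> \<not> lt (fst x) y x)"
      proof (cases "blk P = blk Q \<and> prec P Q")
        case True thus ?thesis using P4 P Q x y f by blast
      next
        case False
        hence t: "tri (blk P) (blk Q)" using pc[OF P Q] pq by blast
        have neq: "blk P \<noteq> blk Q" using t tirr[of "blk P"] blk[OF P] by auto
        have "x \<noteq> y" using neq blk[OF P] blk[OF Q] x y uniq by blast
        moreover have "\<not> lt (fst x) y x"
        proof
          assume "lt (fst x) y x"
          hence "prec Q P" using P3 P Q x y f by (metis)
          hence "tri (blk Q) (blk P)" using tri_compat blk[OF P] blk[OF Q] P Q neq by blast
          thus False using t ttr tirr blk[OF P] blk[OF Q] by blast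
        qed
        ultimately show ?thesis by blast
      qed
    qed
  qed
  show ?thesis using spo' ext al by blast
qed

end
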